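(* Let $N,K,V$ be positive integers. For $v=1,\dots,V$ let $\mathbf{z}_i^v\in\mathbb{R}^{d_v}$ ($i=1,\dots,N$) be representations, $\boldsymbol{\mu}_1^v,\dots,\boldsymbol{\mu}_K^v\in\mathbb{R}^{d_v}$ cluster centroids, and $w^v>0$ scaling factors. Let $\mathcal{S}(\mathbf{a},\mathbf{b})=\frac{1}{1+\|\mathbf{a}-\mathbf{b}\|_2^2}$ and define view-wise soft labels $y_{ij}^v=\mathcal{S}(\mathbf{z}_i^v,\boldsymbol{\mu}_j^v)/\sum_{k=1}^K\mathcal{S}(\mathbf{z}_i^v,\boldsymbol{\mu}_k^v)$. Define the scaled representation $\mathbf{z}_i=[w^1\mathbf{z}_i^1\ \cdots\ w^V\mathbf{z}_i^V]$, the scaled centroids $\mathbf{c}_j=[w^1\boldsymbol{\mu}_j^1\ \cdots\ w^V\boldsymbol{\mu}_j^V]$, and the robust soft labels $y_{ij(t)}=\mathcal{S}(\mathbf{z}_i,\mathbf{c}_j)/\sum_{k=1}^K\mathcal{S}(\mathbf{z}_i,\mathbf{c}_k)$. Suppose that for a sample $i$ and a cluster $a$, the sample is informative and assigned to cluster $a$ in every view, i.e. $y_{ia}^v>y_{ij}^v$ for all $j\neq a$ and all $v=1,\dots,V$. Then $y_{ia(t)}>y_{ij(t)}$ for all $j\neq a$, i.e. the cluster assignment $\arg\max_j y_{ij(t)}$ of the sample in the robust soft labels is also $a$.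
   Context: Setting: multi-view clustering with $N$ samples, $V$ views, and $K$ clusters; $\mathbf{z}_i^v$ is the learned representation of sample $i$ in view $v$, and the cluster assignment of sample $i$ from soft labels $y_{ij}$ is $\arg\max_j y_{ij}$. *)

theory Defs
  imports "HOL-Analysis.Analysis"
begin

text \<open>Vectors in R^d are represented as functions on a finite coordinate index set I.
  Squared Euclidean distance over coordinate set I.\<close>
definition sqdist_on :: "'i set \<Rightarrow> ('i \<Rightarrow> real) \<Rightarrow> ('i \<Rightarrow> real) \<Rightarrow> real" where
  "sqdist_on I a b = (\<Sum>l\<in>I. (a l - b l)^2)"

definition simS :: "'i set \<Rightarrow> ('i \<Rightarrow> real) \<Rightarrow> ('i \<Rightarrow> real) \<Rightarrow> real" where
  "simS I a b = 1 / (1 + sqdist_on I a b)"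

definition soft_label :: "'i set \<Rightarrow> nat \<Rightarrow> ('i \<Rightarrow> real) \<Rightarrow> (nat \<Rightarrow> 'i \<Rightarrow> real) \<Rightarrow> nat \<Rightarrow> real" where
  "soft_label I K z c j = simS I z (c j) / (\<Sum>k<K. simS I z (c k))"

text \<open>Concatenation [w^1 x^1 ... w^V x^V] of V scaled view vectors, x v : {..<d v} -> R,
  as a function on the coordinate set of pairs (v, l) with v < V and l < d v.\<close>
definition concat_coords :: "nat \<Rightarrow> (nat \<Rightarrow> nat) \<Rightarrow> (nat \<times> nat) set" where
  "concat_coords V d = Sigma {..<V} (\<lambda>v. {..<d v})"

definition scaled_concat :: "(nat \<Rightarrow> real) \<Rightarrow> (nat \<Rightarrow> nat \<Rightarrow> real) \<Rightarrow> nat \<times> nat \<Rightarrow> real" where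
  "scaled_concat w x = (\<lambda>(v, l). w v * x v l)"

end

theory Submission
  imports Defs
begin

lemma sqd_nonneg: "sqdist_on I a b \<ge> 0"
  unfolding sqdist_on_def by (simp add: sum_nonneg)

lemma simS_pos: "simS I a b > 0"
  unfolding simS_def using sqd_nonneg[of I a b] by simp

lemma den_pos: "(K::nat) > 0 \<Longrightarrow> (\<Sum>k<K. simS I z (c k)) > 0"
  by (intro sum_pos) (auto simp: simS_pos lessThan_empty_iff)

lemma lessdiv: "(D::real) > 0 \<Longrightarrow> x / D < y / D \<longleftrightarrow> x < y"
  by (simp add: divide_less_cancel)

lemma simS_less_iff: "simS I z x < simS I z y \<longleftrightarrow> sqdist_on I z y < sqdist_on I z x"
  unfolding simS_def using sqd_nonneg[of I z x] sqd_nonneg[of I z y]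
  by (simp add: divide_simps)

lemma sl_less_iff:
  assumes "K > 0"
  shows "soft_label I K z c j < soft_label I K z c a \<longleftrightarrow> sqdist_on I z (c a) < sqdist_on I z (c j)"
  unfolding soft_label_def using den_pos[OF assms, of I z c]
  by (simp add: lessdiv simS_less_iff)

lemma sqd_concat:
  "sqdist_on (concat_coords V d) (scaled_concat w x) (scaled_concat w y)
   = (\<Sum>v<V. (w v)^2 * sqdist_on {..<d v} (x v) (y v))"
proof -
  have e: "(w v * x v l - w v * y v l)^2 = (w v)^2 * (x v l - y v l)^2" for v l
    by (simp add: power2_eq_square algebra_simps)
  show ?thesis
    unfolding sqdist_on_def concat_coords_def scaled_concat_def
    using sum.Sigma[of "{..<V}" "\<lambda>v. {..<d v}" "\<lambda>v l. (w v * x v l - w v * y v l)^2", symmetric]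
    by (simp add: e sum_distrib_left case_prod_unfold)
qed

theorem theorem3:
  fixes N K V :: nat
    and d :: "nat \<Rightarrow> nat"
    and z :: "nat \<Rightarrow> nat \<Rightarrow> nat \<Rightarrow> real"
    and mu :: "nat \<Rightarrow> nat \<Rightarrow> nat \<Rightarrow> real"
    and w :: "nat \<Rightarrow> real"
    and i a :: nat
  assumes "N > 0" and "K > 0" and "V > 0"
    and "\<And>v. v < V \<Longrightarrow> w v > 0"
    and "i < N" and "a < K"
    and informative: "\<And>v j. v < V \<Longrightarrow> j < K \<Longrightarrow> j \<noteq> a \<Longrightarrow>
           soft_label {..<d v} K (z i v) (\<lambda>k. mu k v) a > soft_label {..<d v} K (z i v) (\<lambda>k. mu k v) j"
  shows "\<forall>j<K. j \<noteq> a \<longrightarrow>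
           soft_label (concat_coords V d) K (scaled_concat w (z i)) (\<lambda>k. scaled_concat w (mu k)) a
         > soft_label (concat_coords V d) K (scaled_concat w (z i)) (\<lambda>k. scaled_concat w (mu k)) j"
proof (intro allI impI)
  fix j assume j: "j < K" "j \<noteq> a"
  have lt: "sqdist_on {..<d v} (z i v) (mu a v) < sqdist_on {..<d v} (z i v) (mu j v)" if "v < V" for v
    using informative[OF that j] sl_less_iff[OF assms(2), of "{..<d v}" "z i v" "\<lambda>k. mu k v" j a] by simp
  have "(\<Sum>v<V. (w v)^2 * sqdist_on {..<d v} (z i v) (mu a v))
        < (\<Sum>v<V. (w v)^2 * sqdist_on {..<d v} (z i v) (mu j v))"
  proof (rule sum_strict_mono)
    show "{..<V} \<noteq> {}" using \<open>V>0\<close> by auto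
  next
    fix v assume "v \<in> {..<V}"
    then have "v < V" by simp
    then show "(w v)^2 * sqdist_on {..<d v} (z i v) (mu a v) < (w v)^2 * sqdist_on {..<d v} (z i v) (mu j v)"
      using assms(4)[OF \<open>v<V\<close>] lt[OF \<open>v<V\<close>] by (intro mult_strict_left_mono) simp_all
  qed simp
  then show "soft_label (concat_coords V d) K (scaled_concat w (z i)) (\<lambda>k. scaled_concat w (mu k)) a
         > soft_label (concat_coords V d) K (scaled_concat w (z i)) (\<lambda>k. scaled_concat w (mu k)) j"
    by (simp add: sl_less_iff[OF assms(2)] sqd_concat)
qed

end
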